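(* Let $A$ be a non-zero $n\times m$ matrix with entries in $[0,1]$, with value $v$, and let $y^*$ be the minimax strategy of the column player used by LRCA. Suppose the row player follows a no-regret algorithm having the stability property with respect to $y^*$, and the column player plays the LRCA algorithm. Then for every $\varepsilon>0$ there exists $l\in\mathbb{N}$ such that $f(x_l)-v\le\varepsilon$.
   Context: Repeated two-player zero-sum game: at round $t$ the row player plays $x_t\in\Delta_n$ and the column player $y_t\in\Delta_m$; the row player minimizes, the column player maximizes $x_t^\top Ay_t$. $v$ is the value of the game and $f(x):=\max_{y\in\Delta_m}x^\top Ay$; a minimax strategy of the column player is $y$ with $\min_{x\in\Delta_n}x^\top Ay=v$. The row player's algorithm chooses $x_{t+1}$ from the history; it is no-regret if for every sequence of column strategies, $\lim_{T\to\infty}\big(\min_{i}\frac1T\sum_{t=1}^Te_i^\top Ay_t-\frac1T\sum_{t=1}^Tx_t^\top Ay_t\big)=0$. It has the stability property if, for every $t$, $y_t=y^*$ implies $x_{t+1}=x_t$. LRCA for the column player (who knows $A$): at odd rounds $y_t=y^*$; at even rounds $t$, $e_t\in\arg\max_{e\in\{e_1,\dots,e_m\}}x_{t-1}^\top Ae$, $\alpha_t=\frac{f(x_{t-1})-v}{\max(n/4,2)}$, $y_t=(1-\alpha_t)y^*+\alpha_te_t$. *)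

theory Defs
  imports Complex_Main
begin

text \<open>Vectors are functions nat => real; the simplex of dimension n consists of
  nonnegative vectors supported on indices below n and summing to 1.
  A matrix is a function nat => nat => real, row index i < n, column index j < m.\<close>

definition simplex :: "nat \<Rightarrow> (nat \<Rightarrow> real) set" where
  "simplex n = {x. (\<forall>i<n. 0 \<le> x i) \<and> (\<forall>i\<ge>n. x i = 0) \<and> (\<Sum>i<n. x i) = 1}"

definition unitvec :: "nat \<Rightarrow> nat \<Rightarrow> real" where
  "unitvec j = (\<lambda>k. if k = j then 1 else 0)"

definition payoff :: "nat \<Rightarrow> nat \<Rightarrow> (nat \<Rightarrow> nat \<Rightarrow> real) \<Rightarrow> (nat \<Rightarrow> real) \<Rightarrow> (nat \<Rightarrow> real) \<Rightarrow> real" where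
  "payoff n m A x y = (\<Sum>i<n. \<Sum>j<m. x i * A i j * y j)"

definition fval :: "nat \<Rightarrow> nat \<Rightarrow> (nat \<Rightarrow> nat \<Rightarrow> real) \<Rightarrow> (nat \<Rightarrow> real) \<Rightarrow> real" where
  "fval n m A x = Sup ((\<lambda>y. payoff n m A x y) ` simplex m)"

definition game_value :: "nat \<Rightarrow> nat \<Rightarrow> (nat \<Rightarrow> nat \<Rightarrow> real) \<Rightarrow> real" where
  "game_value n m A = Inf (fval n m A ` simplex n)"

definition minimax_col :: "nat \<Rightarrow> nat \<Rightarrow> (nat \<Rightarrow> nat \<Rightarrow> real) \<Rightarrow> (nat \<Rightarrow> real) \<Rightarrow> bool" where
  "minimax_col n m A y \<longleftrightarrow> y \<in> simplex m \<and>
     Inf ((\<lambda>x. payoff n m A x y) ` simplex n) = game_value n m A"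

text \<open>A (deterministic) row algorithm maps the history [y_1,...,y_t] of column
  strategies to x_{t+1}; in particular x_1 = alg [].\<close>
definition play :: "((nat \<Rightarrow> real) list \<Rightarrow> (nat \<Rightarrow> real)) \<Rightarrow> (nat \<Rightarrow> nat \<Rightarrow> real) \<Rightarrow> nat \<Rightarrow> (nat \<Rightarrow> real)" where
  "play alg y t = alg (map y [1..<t])"

definition valid_alg :: "nat \<Rightarrow> nat \<Rightarrow> ((nat \<Rightarrow> real) list \<Rightarrow> (nat \<Rightarrow> real)) \<Rightarrow> bool" where
  "valid_alg n m alg \<longleftrightarrow> (\<forall>h. set h \<subseteq> simplex m \<longrightarrow> alg h \<in> simplex n)"

definition no_regret :: "nat \<Rightarrow> nat \<Rightarrow> (nat \<Rightarrow> nat \<Rightarrow> real) \<Rightarrow> ((nat \<Rightarrow> real) list \<Rightarrow> (nat \<Rightarrow> real)) \<Rightarrow> bool" where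
  "no_regret n m A alg \<longleftrightarrow>
     (\<forall>y. (\<forall>t. y t \<in> simplex m) \<longrightarrow>
        (\<lambda>T. Min ((\<lambda>i. (1 / real T) * (\<Sum>t=1..T. payoff n m A (unitvec i) (y t))) ` {..<n})
             - (1 / real T) * (\<Sum>t=1..T. payoff n m A (play alg y t) (y t))) \<longlonglongrightarrow> 0)"

definition stability_prop :: "nat \<Rightarrow> ((nat \<Rightarrow> real) list \<Rightarrow> (nat \<Rightarrow> real)) \<Rightarrow> (nat \<Rightarrow> real) \<Rightarrow> bool" where
  "stability_prop m alg ystar \<longleftrightarrow> (\<forall>h. set h \<subseteq> simplex m \<longrightarrow> alg (h @ [ystar]) = alg h)"

text \<open>The column sequence y is generated by LRCA against the row algorithm
  (any tie-breaking in the argmax).\<close>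
definition lrca :: "nat \<Rightarrow> nat \<Rightarrow> (nat \<Rightarrow> nat \<Rightarrow> real) \<Rightarrow> (nat \<Rightarrow> real) \<Rightarrow>
    ((nat \<Rightarrow> real) list \<Rightarrow> (nat \<Rightarrow> real)) \<Rightarrow> (nat \<Rightarrow> nat \<Rightarrow> real) \<Rightarrow> bool" where
  "lrca n m A ystar alg y \<longleftrightarrow>
     (\<forall>t\<ge>1. odd t \<longrightarrow> y t = ystar) \<and>
     (\<forall>t\<ge>1. even t \<longrightarrow>
        (\<exists>j<m. (\<forall>j'<m. payoff n m A (play alg y (t - 1)) (unitvec j')
                         \<le> payoff n m A (play alg y (t - 1)) (unitvec j)) \<and>
           (let \<alpha> = (fval n m A (play alg y (t - 1)) - game_value n m A) / max (real n / 4) 2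
            in y t = (\<lambda>k. (1 - \<alpha>) * ystar k + \<alpha> * unitvec j k))))"

end

theory Submission
  imports Defs
begin

lemma payoff_unit_row:
  "i < n \<Longrightarrow> payoff n m A (unitvec i) y = (\<Sum>j<m. A i j * y j)"
proof -
  assume i: "i < n"
  have "payoff n m A (unitvec i) y = (\<Sum>k<n. if k = i then (\<Sum>j<m. A k j * y j) else 0)"
    unfolding payoff_def unitvec_def by (rule sum.cong) auto
  also have "\<dots> = (\<Sum>j<m. A i j * y j)" using i by (simp add: sum.delta)
  finally show ?thesis .
qed

lemma payoff_unit_col:
  "j < m \<Longrightarrow> payoff n m A x (unitvec j) = (\<Sum>i<n. x i * A i j)"
proof -
  assume j: "j < m"
  have "payoff n m A x (unitvec j) = (\<Sum>i<n. \<Sum>k<m. if k = j then x i * A i j else 0)"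
    unfolding payoff_def unitvec_def by (intro sum.cong) auto
  also have "\<dots> = (\<Sum>i<n. x i * A i j)" using j by (simp add: sum.delta)
  finally show ?thesis .
qed

lemma payoff_lin_x:
  "payoff n m A x y = (\<Sum>i<n. x i * payoff n m A (unitvec i) y)"
proof -
  have "(\<Sum>i<n. x i * payoff n m A (unitvec i) y) = (\<Sum>i<n. x i * (\<Sum>j<m. A i j * y j))"
    by (rule sum.cong) (auto simp: payoff_unit_row)
  also have "\<dots> = payoff n m A x y"
    unfolding payoff_def by (simp add: sum_distrib_left mult.assoc)
  finally show ?thesis by simp
qed

lemma payoff_lin_y:
  "payoff n m A x y = (\<Sum>j<m. y j * payoff n m A x (unitvec j))"
proof -
  have "(\<Sum>j<m. y j * payoff n m A x (unitvec j)) = (\<Sum>j<m. y j * (\<Sum>i<n. x i * A i j))"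
    by (rule sum.cong) (auto simp: payoff_unit_col)
  also have "\<dots> = payoff n m A x y"
    unfolding payoff_def by (subst sum.swap) (simp add: sum_distrib_left sum_distrib_right mult_ac)
  finally show ?thesis by simp
qed

lemma unitvec_simplex: "j < m \<Longrightarrow> unitvec j \<in> simplex m"
  unfolding simplex_def unitvec_def by (auto simp: sum.delta)

lemma payoff_le_col:
  assumes "y \<in> simplex m" "\<forall>j'<m. payoff n m A x (unitvec j') \<le> M"
  shows "payoff n m A x y \<le> M"
proof -
  have "payoff n m A x y = (\<Sum>j<m. y j * payoff n m A x (unitvec j))" by (rule payoff_lin_y)
  also have "\<dots> \<le> (\<Sum>j<m. y j * M)"
    using assms by (intro sum_mono mult_left_mono) (auto simp: simplex_def)
  also have "\<dots> = M" using assms(1) by (simp add: simplex_def sum_distrib_right[symmetric])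
  finally show ?thesis .
qed

lemma fval_eq:
  assumes "j < m" "\<forall>j'<m. payoff n m A x (unitvec j') \<le> payoff n m A x (unitvec j)"
  shows "fval n m A x = payoff n m A x (unitvec j)"
  unfolding fval_def
  by (rule cSup_eq_maximum) (use assms unitvec_simplex payoff_le_col in auto)

lemma argmax_ex:
  assumes "0 < m"
  obtains j where "j < m" "\<forall>j'<m. payoff n m A x (unitvec j') \<le> payoff n m A x (unitvec j)"
proof -
  let ?S = "(\<lambda>j. payoff n m A x (unitvec j)) ` {..<m}"
  have "Max ?S \<in> ?S" using assms by (intro Max_in) auto
  then obtain j where "j < m" "Max ?S = payoff n m A x (unitvec j)" by auto
  then show ?thesis using that[of j] by (metis Max_ge finite_imageI finite_lessThan image_eqI lessThan_iff)
qed

lemma payoff_nonneg: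
  assumes "\<forall>i<n. \<forall>j<m. 0 \<le> A i j" "x \<in> simplex n" "y \<in> simplex m"
  shows "0 \<le> payoff n m A x y"
  using assms unfolding payoff_def simplex_def by (auto intro!: sum_nonneg)

lemma fval_bounds:
  assumes "\<forall>i<n. \<forall>j<m. 0 \<le> A i j \<and> A i j \<le> 1" "x \<in> simplex n" "0 < m"
  shows "0 \<le> fval n m A x" "fval n m A x \<le> 1"
    "\<And>y. y \<in> simplex m \<Longrightarrow> payoff n m A x y \<le> fval n m A x"
proof -
  obtain j where j: "j < m" "\<forall>j'<m. payoff n m A x (unitvec j') \<le> payoff n m A x (unitvec j)"
    using argmax_ex[OF assms(3)] by blast
  have f: "fval n m A x = payoff n m A x (unitvec j)" by (rule fval_eq[OF j])
  show "0 \<le> fval n m A x" unfolding f using assms j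
    by (intro payoff_nonneg unitvec_simplex) auto
  have "payoff n m A x (unitvec j) = (\<Sum>i<n. x i * A i j)" by (rule payoff_unit_col[OF j(1)])
  also have "\<dots> \<le> (\<Sum>i<n. x i * 1)"
    using assms j by (intro sum_mono mult_left_mono) (auto simp: simplex_def)
  also have "\<dots> = 1" using assms(2) by (simp add: simplex_def)
  finally show "fval n m A x \<le> 1" unfolding f .
  show "\<And>y. y \<in> simplex m \<Longrightarrow> payoff n m A x y \<le> fval n m A x"
    unfolding f using j by (intro payoff_le_col) auto
qed


lemma weak_dual:
  assumes "0 < n" "0 < m" "\<forall>i<n. \<forall>j<m. 0 \<le> A i j \<and> A i j \<le> 1" "1 \<le> T"
    "\<forall>t\<in>{1..T}. ys t \<in> simplex m"
  shows "Min ((\<lambda>i. (1 / real T) * (\<Sum>t=1..T. payoff n m A (unitvec i) (ys t))) ` {..<n})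
     \<le> game_value n m A"
  unfolding game_value_def
proof (rule cInf_greatest)
  show "fval n m A ` simplex n \<noteq> {}" using unitvec_simplex[OF assms(1)] by auto
next
  fix z assume "z \<in> fval n m A ` simplex n"
  then obtain x0 where x0: "x0 \<in> simplex n" and z: "z = fval n m A x0" by auto
  define a where "a i = (1 / real T) * (\<Sum>t=1..T. payoff n m A (unitvec i) (ys t))" for i
  define M where "M = Min (a ` {..<n})"
  have "M = (\<Sum>i<n. x0 i * M)" using x0 by (simp add: simplex_def sum_distrib_right[symmetric])
  also have "\<dots> \<le> (\<Sum>i<n. x0 i * a i)"
    using x0 unfolding M_def by (intro sum_mono mult_left_mono) (auto simp: simplex_def)
  also have "\<dots> = (1 / real T) * (\<Sum>t=1..T. \<Sum>i<n. x0 i * payoff n m A (unitvec i) (ys t))"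
    unfolding a_def by (subst sum.swap) (simp add: sum_distrib_left mult_ac)
  also have "\<dots> = (1 / real T) * (\<Sum>t=1..T. payoff n m A x0 (ys t))"
    by (simp add: payoff_lin_x[symmetric])
  also have "\<dots> \<le> (1 / real T) * (\<Sum>t=1..T. fval n m A x0)"
    using assms x0 by (intro mult_left_mono sum_mono fval_bounds(3)) auto
  also have "\<dots> = fval n m A x0" using assms(4) by simp
  finally show "Min ((\<lambda>i. (1 / real T) * (\<Sum>t=1..T. payoff n m A (unitvec i) (ys t))) ` {..<n}) \<le> z"
    unfolding z M_def a_def .
qed

lemma pair_sum:
  fixes g :: "nat \<Rightarrow> real"
  assumes "\<And>K. v \<le> g (2*K+1)" "\<And>K. v + d \<le> g (2*K+2)"
  shows "real (2*K) * v + real K * d \<le> (\<Sum>t=1..2*K. g t)"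
proof (induction K)
  case 0 then show ?case by simp
next
  case (Suc K)
  have e: "2 * Suc K = Suc (Suc (2*K))" by simp
  have "(\<Sum>t=1..2*Suc K. g t) = (\<Sum>t=1..2*K. g t) + g (2*K+1) + g (2*K+2)"
    unfolding e by (simp add: sum.cl_ivl_Suc)
  then show ?case using Suc assms[of K] by (simp add: algebra_simps)
qed


theorem theorem18:
  fixes n m :: nat and A :: "nat \<Rightarrow> nat \<Rightarrow> real"
    and ystar :: "nat \<Rightarrow> real"
    and alg :: "(nat \<Rightarrow> real) list \<Rightarrow> (nat \<Rightarrow> real)"
    and y :: "nat \<Rightarrow> nat \<Rightarrow> real"
  assumes entries: "\<forall>i<n. \<forall>j<m. 0 \<le> A i j \<and> A i j \<le> 1"
    and nonzero: "\<exists>i<n. \<exists>j<m. A i j \<noteq> 0"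
    and minimax: "minimax_col n m A ystar"
    and valid: "valid_alg n m alg"
    and noregret: "no_regret n m A alg"
    and stab: "stability_prop m alg ystar"
    and col: "lrca n m A ystar alg y"
  shows "\<forall>\<epsilon>>0. \<exists>l\<ge>1. fval n m A (play alg y l) - game_value n m A \<le> \<epsilon>"
proof -
  have n0: "0 < n" and m0: "0 < m" using nonzero by auto
  define v where "v = game_value n m A"
  define c where "c = max (real n / 4) 2"
  have c2: "2 \<le> c" unfolding c_def by simp
  define x where "x t = play alg y t" for t
  have ys: "ystar \<in> simplex m" using minimax by (simp add: minimax_col_def)
  have ne: "simplex n \<noteq> {}" using unitvec_simplex[OF n0] by auto
  have Ale: "\<forall>i<n. \<forall>j<m. 0 \<le> A i j" using entries by auto
  have v_le: "v \<le> fval n m A z" if "z \<in> simplex n" for z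
    unfolding v_def game_value_def
    by (rule cInf_lower) (use that fval_bounds[OF entries _ m0] in \<open>auto simp: bdd_below_def\<close>)
  have v0: "0 \<le> v"
    unfolding v_def game_value_def
    by (rule cInf_greatest) (use ne fval_bounds[OF entries _ m0] in auto)
  have pstar: "v \<le> payoff n m A z ystar" if "z \<in> simplex n" for z
  proof -
    have "Inf ((\<lambda>x. payoff n m A x ystar) ` simplex n) \<le> payoff n m A z ystar"
      by (rule cInf_lower) (use that payoff_nonneg[OF Ale _ ys] in \<open>auto simp: bdd_below_def\<close>)
    then show ?thesis using minimax by (simp add: minimax_col_def v_def)
  qed
  have xs_if: "x t \<in> simplex n" if "\<forall>s. 1 \<le> s \<and> s < t \<longrightarrow> y s \<in> simplex m" for t
  proof -
    have "set (map y [1..<t]) \<subseteq> simplex m" using that by auto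
    then show ?thesis using valid unfolding valid_alg_def x_def play_def by blast
  qed
  from col have odd_y: "\<forall>t\<ge>1. odd t \<longrightarrow> y t = ystar" and even_y: "\<forall>t\<ge>1. even t \<longrightarrow>
        (\<exists>j<m. (\<forall>j'<m. payoff n m A (x (t - 1)) (unitvec j')
                         \<le> payoff n m A (x (t - 1)) (unitvec j)) \<and>
           y t = (\<lambda>k. (1 - (fval n m A (x (t - 1)) - v) / c) * ystar k
              + (fval n m A (x (t - 1)) - v) / c * unitvec j k))"
    unfolding lrca_def x_def v_def c_def Let_def by auto
  have ysimp: "y t \<in> simplex m" if "1 \<le> t" for t
    using that
  proof (induction t rule: less_induct)
    case (less t)
    show ?case
    proof (cases "odd t")
      case True then show ?thesis using odd_y less ys by auto
    next
      case False
      then obtain j where j: "j < m" and yt: "y t = (\<lambda>k. (1 - (fval n m A (x (t - 1)) - v) / c) * ystar k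
              + (fval n m A (x (t - 1)) - v) / c * unitvec j k)"
        using even_y less by blast
      have xin: "x (t - 1) \<in> simplex n" by (rule xs_if) (use less in auto)
      define \<alpha> where "\<alpha> = (fval n m A (x (t - 1)) - v) / c"
      have a0: "0 \<le> \<alpha>" unfolding \<alpha>_def using v_le[OF xin] c2 by auto
      have a1: "\<alpha> \<le> 1" unfolding \<alpha>_def using fval_bounds[OF entries xin m0] v0 c2
        by (simp add: divide_le_eq)
      have e: "unitvec j \<in> simplex m" by (rule unitvec_simplex[OF j])
      have "(\<Sum>k<m. (1 - \<alpha>) * ystar k + \<alpha> * unitvec j k) = (1 - \<alpha>) * (\<Sum>k<m. ystar k) + \<alpha> * (\<Sum>k<m. unitvec j k)"
        by (simp add: sum.distrib sum_distrib_left)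
      also have "\<dots> = 1" using ys e by (simp add: simplex_def)
      finally have "(\<Sum>k<m. (1 - \<alpha>) * ystar k + \<alpha> * unitvec j k) = 1" .
      then show ?thesis unfolding yt \<alpha>_def[symmetric] using ys e a0 a1
        by (auto simp: simplex_def intro!: add_nonneg_nonneg mult_nonneg_nonneg)
    qed
  qed
  have xsimp: "x t \<in> simplex n" for t by (rule xs_if) (use ysimp in auto)
  have stable: "x t = x (t - 1)" if ev: "even t" and t2: "2 \<le> t" for t
  proof -
    obtain s where s: "t = Suc s" "1 \<le> s" 
    proof -
      have "t = Suc (t - 1)" "1 \<le> t - 1" using t2 by auto
      then show ?thesis using that by blast
    qed
    have "odd s" using ev s by auto
    then have "y s = ystar" using odd_y s by auto
    have "[1..<t] = [1..<s] @ [s]" using s by simp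
    then have "map y [1..<t] = map y [1..<s] @ [ystar]" using \<open>y s = ystar\<close> by simp
    moreover have "set (map y [1..<s]) \<subseteq> simplex m" using ysimp by auto
    ultimately show ?thesis using stab unfolding stability_prop_def x_def play_def
      using s by simp
  qed
  show ?thesis
  proof (rule ccontr)
    assume "\<not> ?thesis"
    then obtain \<epsilon> where ep: "\<epsilon> > 0" and big: "\<And>l. 1 \<le> l \<Longrightarrow> fval n m A (x l) - v > \<epsilon>"
      unfolding x_def v_def by force
    define d where "d = \<epsilon>^2 / c"
    have d0: "0 < d" unfolding d_def using ep c2 by auto
    define g where "g t = payoff n m A (x t) (y t)" for t
    have godd: "v \<le> g (2*K+1)" for K
      using odd_y pstar[OF xsimp] unfolding g_def by simp
    have geven: "v + d \<le> g (2*K+2)" for K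
    proof -
      define t where "t = 2*K+2"
      have t: "even t" "2 \<le> t" "1 \<le> t" unfolding t_def by auto
      then obtain j where j: "j < m" and jmax: "\<forall>j'<m. payoff n m A (x (t - 1)) (unitvec j')
                         \<le> payoff n m A (x (t - 1)) (unitvec j)" and yt: "y t = (\<lambda>k. (1 - (fval n m A (x (t - 1)) - v) / c) * ystar k
              + (fval n m A (x (t - 1)) - v) / c * unitvec j k)"
        using even_y by blast
      have xt: "x (t - 1) = x t" using stable[OF t(1,2)] by simp
      define F where "F = fval n m A (x t)"
      define \<alpha> where "\<alpha> = (F - v) / c"
      have Fe: "F = payoff n m A (x t) (unitvec j)" unfolding F_def
        using fval_eq[OF j] jmax xt by simp
      have Fv: "F - v > \<epsilon>" unfolding F_def using big t by simp
      have a1: "\<alpha> \<le> 1" unfolding \<alpha>_def using fval_bounds(2)[OF entries xsimp m0, of t] v0 c2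
        by (simp add: divide_le_eq F_def)
      have yt': "y t = (\<lambda>k. (1 - \<alpha>) * ystar k + \<alpha> * unitvec j k)"
        using yt xt unfolding \<alpha>_def F_def by simp
      have "g t = (1 - \<alpha>) * payoff n m A (x t) ystar + \<alpha> * payoff n m A (x t) (unitvec j)"
      proof -
        have eq: "x t i * A i k * ((1 - \<alpha>) * ystar k + \<alpha> * unitvec j k)
           = (1 - \<alpha>) * (x t i * A i k * ystar k) + \<alpha> * (x t i * A i k * unitvec j k)" for i k
          by (simp add: algebra_simps)
        have "g t = (\<Sum>i<n. \<Sum>k<m. (1 - \<alpha>) * (x t i * A i k * ystar k) + \<alpha> * (x t i * A i k * unitvec j k))"
          unfolding g_def yt' payoff_def by (simp only: eq)
        also have "\<dots> = (1 - \<alpha>) * payoff n m A (x t) ystar + \<alpha> * payoff n m A (x t) (unitvec j)"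
          unfolding payoff_def by (simp add: sum.distrib sum_distrib_left)
        finally show ?thesis .
      qed
      also have "\<dots> = (1 - \<alpha>) * payoff n m A (x t) ystar + \<alpha> * F" using Fe by simp
      also have "\<dots> \<ge> (1 - \<alpha>) * v + \<alpha> * F"
        using pstar[OF xsimp, of t] a1 by (simp add: mult_left_mono)
      finally have "g t \<ge> v + \<alpha> * (F - v)" by (simp add: algebra_simps)
      moreover have "\<alpha> * (F - v) = (F - v)^2 / c" unfolding \<alpha>_def by (simp add: power2_eq_square)
      moreover have "\<epsilon>^2 \<le> (F - v)^2" using Fv ep by (intro power_mono) auto
      then have "d \<le> (F - v)^2 / c" unfolding d_def using c2 by (intro divide_right_mono) auto
      ultimately show ?thesis unfolding t_def by linarith
    qed
    define y' where "y' t = (if t = 0 then ystar else y t)" for t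
    have y'simp: "\<forall>t. y' t \<in> simplex m" using ys ysimp unfolding y'_def by simp
    have play': "play alg y' t = x t" for t
    proof -
      have "map y' [1..<t] = map y [1..<t]" unfolding y'_def by (rule map_cong) auto
      then show ?thesis unfolding play_def x_def by (rule arg_cong[where f=alg])
    qed
    define r where "r T = Min ((\<lambda>i. (1 / real T) * (\<Sum>t=1..T. payoff n m A (unitvec i) (y' t))) ` {..<n})
             - (1 / real T) * (\<Sum>t=1..T. payoff n m A (play alg y' t) (y' t))" for T
    have lim: "r \<longlonglongrightarrow> 0" using noregret y'simp unfolding no_regret_def r_def by blast
    have rle: "r (2*K+2) \<le> - d / 2" for K
    proof -
      define T where "T = 2*K+2"
      have T1: "1 \<le> T" unfolding T_def by simp
      have m1: "Min ((\<lambda>i. (1 / real T) * (\<Sum>t=1..T. payoff n m A (unitvec i) (y' t))) ` {..<n}) \<le> v"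
        unfolding v_def by (rule weak_dual[OF n0 m0 entries T1]) (use y'simp in auto)
      have "(\<Sum>t=1..T. payoff n m A (play alg y' t) (y' t)) = (\<Sum>t=1..2*(K+1). g t)"
        unfolding T_def g_def play' y'_def by (intro sum.cong) auto
      also have "\<dots> \<ge> real (2*(K+1)) * v + real (K+1) * d"
        by (rule pair_sum) (use godd geven in auto)
      finally have s: "real T * v + real T * (d/2) \<le> (\<Sum>t=1..T. payoff n m A (play alg y' t) (y' t))"
        unfolding T_def by (simp add: algebra_simps)
      have "v + d/2 \<le> (1 / real T) * (\<Sum>t=1..T. payoff n m A (play alg y' t) (y' t))"
        using s T1 by (simp add: field_simps)
      then show ?thesis using m1 unfolding r_def T_def by linarith
    qed
    have "(\<lambda>K. r (2*K+2)) \<longlonglongrightarrow> 0"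
    proof -
      have "strict_mono (\<lambda>K::nat. 2*K+2)" by (auto simp: strict_mono_def)
      from LIMSEQ_subseq_LIMSEQ[OF lim this] show ?thesis by (simp add: o_def)
    qed
    then have "0 \<le> - d / 2" by (rule LIMSEQ_le_const2) (use rle in auto)
    then show False using d0 by simp
  qed
qed

end
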